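(* Let $k \ge 1$ and $k \le m < 2k$. The number of biGrassmannian permutations of $[m]$ that avoid $\operatorname{id}_k = 12\cdots k$ is $\binom{2k-m+1}{3}$.
   Context: A permutation is Grassmannian if it has at most one descent (one-line notation); it is biGrassmannian if both it and its inverse are Grassmannian. A permutation avoids $12\cdots k$ if it has no increasing subsequence of length $k$. *)

theory Defs
  imports "HOL-Combinatorics.Permutations"
begin

text \<open>Permutations of [m] = {1..m} are functions p with p permutes {1..m}.\<close>

definition descents :: "nat \<Rightarrow> (nat \<Rightarrow> nat) \<Rightarrow> nat set" where
  "descents m p = {i \<in> {1..<m}. p i > p (Suc i)}"

definition grassmannian :: "nat \<Rightarrow> (nat \<Rightarrow> nat) \<Rightarrow> bool" where
  "grassmannian m p \<longleftrightarrow> card (descents m p) \<le> 1"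

definition bigrassmannian :: "nat \<Rightarrow> (nat \<Rightarrow> nat) \<Rightarrow> bool" where
  "bigrassmannian m p \<longleftrightarrow> grassmannian m p \<and> grassmannian m (inv p)"

definition contains_id :: "nat \<Rightarrow> nat \<Rightarrow> (nat \<Rightarrow> nat) \<Rightarrow> bool" where
  "contains_id m k p \<longleftrightarrow> (\<exists>f :: nat \<Rightarrow> nat. f ` {..<k} \<subseteq> {1..m} \<and>
      strict_mono_on {..<k} f \<and> strict_mono_on {..<k} (p \<circ> f))"

definition avoids_id :: "nat \<Rightarrow> nat \<Rightarrow> (nat \<Rightarrow> nat) \<Rightarrow> bool" where
  "avoids_id m k p \<longleftrightarrow> \<not> contains_id m k p"

end

theory Submission
  imports Defs
begin


definition blk :: "nat \<Rightarrow> nat \<Rightarrow> nat \<Rightarrow> nat \<Rightarrow> nat" where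
  "blk a b c i = (if i \<le> a then i else if i \<le> a+b then i+c else if i \<le> a+b+c then i-b else i)"

lemma blk_inv: "blk a c b (blk a b c i) = i"
  unfolding blk_def by auto

lemma blk_permutes: assumes "a+b+c \<le> m" shows "blk a b c permutes {1..m}"
  unfolding permutes_def
proof (intro conjI allI impI)
  fix x assume "x \<notin> {1..m}" then show "blk a b c x = x" using assms by (auto simp: blk_def)
next
  fix y show "\<exists>!x. blk a b c x = y"
    by (metis blk_inv)
qed

lemma blk_inv_eq: "inv (blk a b c) = blk a c b"
  by (rule inv_equality) (simp_all add: blk_inv)

lemma blk_desc: "descents m (blk a b c) \<subseteq> {a+b}"
  unfolding descents_def by (auto simp: blk_def)

lemma blk_grass: "grassmannian m (blk a b c)"
proof -
  have "card (descents m (blk a b c)) \<le> card {a+b}" by (rule card_mono) (simp_all add: blk_desc)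
  then show ?thesis by (simp add: grassmannian_def)
qed

lemma blk_bigrass: "bigrassmannian m (blk a b c)"
  by (simp add: bigrassmannian_def blk_grass blk_inv_eq)

lemma blk_mono1: "strict_mono_on {1..a+b} (blk a b c)"
  by (rule strict_mono_onI) (auto simp: blk_def)
lemma blk_mono2: "strict_mono_on {Suc (a+b)..m} (blk a b c)"
  by (rule strict_mono_onI) (auto simp: blk_def)

lemma blk_img: "blk a b c ` {1..a+b} = {1..<Suc a} \<union> {Suc (a+c)..<Suc (a+b+c)}"
proof
  show "blk a b c ` {1..a+b} \<subseteq> {1..<Suc a} \<union> {Suc (a+c)..<Suc (a+b+c)}"
    by (auto simp: blk_def)
next
  show "{1..<Suc a} \<union> {Suc (a+c)..<Suc (a+b+c)} \<subseteq> blk a b c ` {1..a+b}"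
  proof
    fix x assume x: "x \<in> {1..<Suc a} \<union> {Suc (a+c)..<Suc (a+b+c)}"
    show "x \<in> blk a b c ` {1..a+b}"
    proof (cases "x \<le> a")
      case True then show ?thesis using x by (intro image_eqI[of _ _ x]) (auto simp: blk_def)
    next
      case False then show ?thesis using x by (intro image_eqI[of _ _ "x - c"]) (auto simp: blk_def)
    qed
  qed
qed

lemma blk_inj:
  assumes "1 \<le> b" "1 \<le> c" "1 \<le> b'" "1 \<le> c'" "blk a b c = blk a' b' c'"
  shows "a = a' \<and> b = b' \<and> c = c'"
proof -
  have aa: "a = a'"
  proof (rule ccontr)
    assume "a \<noteq> a'"
    then consider "a < a'" | "a' < a" by linarith
    then show False
    proof cases
      case 1 then have "blk a b c (Suc a) = blk a' b' c' (Suc a)" using assms by simp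
      then show False using 1 assms(1-4) by (simp add: blk_def split: if_splits)
    next
      case 2 then have "blk a b c (Suc a') = blk a' b' c' (Suc a')" using assms by simp
      then show False using 2 assms(1-4) by (simp add: blk_def split: if_splits)
    qed
  qed
  have cc: "c = c'"
  proof -
    have "blk a b c (Suc a) = blk a' b' c' (Suc a)" using assms by simp
    then show ?thesis using aa assms(1-4) by (simp add: blk_def split: if_splits)
  qed
  have "blk a b c (a+b+c) = blk a' b' c' (a+b+c)" using assms by simp
  then have "b = b'" using aa cc assms(1-4) by (simp add: blk_def split: if_splits)
  then show ?thesis using aa cc by simp
qed



lemma adj_mono:
  assumes "\<And>i. lo \<le> i \<Longrightarrow> i < hi \<Longrightarrow> f i < f (Suc i)"
  shows "strict_mono_on {lo..hi} (f::nat \<Rightarrow> nat)"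
proof (rule strict_mono_onI)
  fix x y assume "x \<in> {lo..hi}" "y \<in> {lo..hi}" "x < y"
  then show "f x < f y"
  proof (induction y)
    case 0 then show ?case by simp
  next
    case (Suc y)
    show ?case
    proof (cases "x = y")
      case True then show ?thesis using Suc.prems assms by auto
    next
      case False
      then have "f x < f y" using Suc by auto
      also have "f y < f (Suc y)" using Suc.prems False assms by auto
      finally show ?thesis .
    qed
  qed
qed



lemma mono_unique:
  assumes f: "strict_mono_on {lo..hi} (f::nat\<Rightarrow>nat)" and g: "strict_mono_on {lo..hi} g"
    and im: "f ` {lo..hi} = g ` {lo..hi}"
  shows "i \<in> {lo..hi} \<Longrightarrow> f i = g i"
proof (induction i rule: less_induct)
  case (less i)
  show ?case
  proof (rule ccontr)
    assume ne: "f i \<noteq> g i"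
    then consider "f i < g i" | "g i < f i" by linarith
    then show False
    proof cases
      case 1
      have "f i \<in> g ` {lo..hi}" using im less.prems by blast
      then obtain j where j: "j \<in> {lo..hi}" "g j = f i" by auto
      have "j < i"
      proof (rule ccontr)
        assume "\<not> j < i"
        then have "i < j \<or> i = j" by linarith
        then show False using 1 j strict_mono_onD[OF g, of i j] less.prems by auto
      qed
      then have "f j = g j" using less j by auto
      then show False using j \<open>j < i\<close> strict_mono_onD[OF f, of j i] less.prems by auto
    next
      case 2
      have "g i \<in> f ` {lo..hi}" using im less.prems by blast
      then obtain j where j: "j \<in> {lo..hi}" "f j = g i" by auto
      have "j < i"
      proof (rule ccontr)
        assume "\<not> j < i"
        then have "i < j \<or> i = j" by linarith
        then show False using 2 j strict_mono_onD[OF f, of i j] less.prems by auto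
      qed
      then have "f j = g j" using less j by auto
      then show False using j \<open>j < i\<close> strict_mono_onD[OF g, of j i] less.prems by auto
    qed
  qed
qed



lemma dc_interval:
  assumes lh: "lo \<le> Suc hi" and sub: "D \<subseteq> {lo..hi}" and dc: "\<And>v u. v \<in> D \<Longrightarrow> lo \<le> u \<Longrightarrow> u \<le> v \<Longrightarrow> u \<in> D"
  shows "\<exists>e. lo \<le> e \<and> e \<le> Suc hi \<and> D = {lo..<(e::nat)}"
proof (cases "D = {}")
  case True then show ?thesis using lh by (intro exI[of _ lo]) auto
next
  case False
  have fin: "finite D" using sub finite_subset by blast
  have M: "Max D \<in> D" using fin False by simp
  have "D = {lo..<Suc (Max D)}"
  proof
    show "D \<subseteq> {lo..<Suc (Max D)}" using sub fin by (auto simp: less_Suc_eq_le)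
    show "{lo..<Suc (Max D)} \<subseteq> D" using dc M by auto
  qed
  then show ?thesis using M sub by (intro exI[of _ "Suc (Max D)"]) auto
qed



lemma desc_mono:
  assumes p: "f permutes {1..m}" and d: "descents m f \<subseteq> {t}"
  shows "strict_mono_on {1..t} f" "strict_mono_on {Suc t..m} f"
proof -
  have inj: "inj f" using p permutes_inj by blast
  have step: "f i < f (Suc i)" if "1 \<le> i" "i < m" "i \<noteq> t" for i
  proof -
    have "i \<notin> descents m f" using d that by blast
    then have "\<not> f i > f (Suc i)" using that unfolding descents_def by simp
    moreover have "f i \<noteq> f (Suc i)" using injD[OF inj, of i "Suc i"] by auto
    ultimately show ?thesis by linarith
  qed
  show "strict_mono_on {1..t} f"
  proof (cases "t \<le> m")
    case True then show ?thesis by (intro adj_mono step) auto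
  next
    case False
    have "strict_mono_on {1..m} f"
    proof (intro adj_mono)
      fix i assume "1 \<le> i" "i < m" then show "f i < f (Suc i)" using False step by simp
    qed
    note mm = this
    have fix1: "f x = x" if "x > m" for x using p that by (intro permutes_not_in) auto
    have inr: "f x \<in> {1..m}" if "x \<in> {1..m}" for x by (rule iffD2[OF permutes_in_image[OF p] that])
    show ?thesis
    proof (rule strict_mono_onI)
      fix x y assume xy: "x \<in> {1..t}" "y \<in> {1..t}" "x < y"
      show "f x < f y"
      proof (cases "y \<le> m")
        case True then show ?thesis using strict_mono_onD[OF mm, of x y] xy by auto
      next
        case False
        then have fy: "f y = y" using fix1 by simp
        show ?thesis
        proof (cases "x \<le> m")
          case True then show ?thesis using inr[of x] xy fy False by auto
        next
          case False then show ?thesis using fix1[of x] xy fy by auto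
        qed
      qed
    qed
  qed
  show "strict_mono_on {Suc t..m} f" by (intro adj_mono step) auto
qed




lemma nodesc_id:
  assumes p: "f permutes {1..m}" and d: "descents m f = {}"
  shows "f i = i"
proof -
  have sm: "strict_mono_on {1..m} f" using desc_mono(1)[OF p, of m] d by simp
  have im: "f ` {1..m} = id ` {1..m}" using permutes_image[OF p] by simp
  have "strict_mono_on {1..m} (id::nat\<Rightarrow>nat)" by (rule strict_mono_onI) simp
  show ?thesis
  proof (cases "i \<in> {1..m}")
    case True then show ?thesis using mono_unique[OF sm \<open>strict_mono_on {1..m} id\<close> im] by simp
  next
    case False then show ?thesis using p by (simp add: permutes_not_in)
  qed
qed



lemma one_desc:
  assumes p: "f permutes {1..m}" and g: "grassmannian m f" and nid: "\<exists>i. f i \<noteq> i"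
  obtains t where "descents m f = {t}"
proof -
  have ne: "descents m f \<noteq> {}" using nodesc_id[OF p] nid by blast
  have fin: "finite (descents m f)" unfolding descents_def by simp
  have "card (descents m f) \<noteq> 0" using ne fin by simp
  moreover have "card (descents m f) \<le> 1" using g unfolding grassmannian_def .
  ultimately have "card (descents m f) = 1" by linarith
  then show ?thesis using that card_1_singletonE by blast
qed


lemma img_compl:
  assumes p: "f permutes S" and XY: "X \<union> Y = S" "X \<inter> Y = {}"
  shows "f ` Y = S - f ` X"
proof
  have inj: "inj f" using p permutes_inj by blast
  have fS: "f ` S = S" using permutes_image[OF p] .
  show "f ` Y \<subseteq> S - f ` X"
  proof
    fix z assume "z \<in> f ` Y"
    then obtain y where y: "y \<in> Y" "z = f y" by blast
    have "z \<in> S" using y fS XY by blast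
    moreover have "z \<notin> f ` X"
    proof
      assume "z \<in> f ` X"
      then obtain x where "x \<in> X" "z = f x" by blast
      then have "x = y" using y injD[OF inj] by metis
      then show False using \<open>x \<in> X\<close> y XY by blast
    qed
    ultimately show "z \<in> S - f ` X" by blast
  qed
  show "S - f ` X \<subseteq> f ` Y"
  proof
    fix z assume z: "z \<in> S - f ` X"
    then obtain w where w: "w \<in> S" "z = f w" using fS by blast
    then have "w \<notin> X" using z by blast
    then have "w \<in> Y" using w XY by blast
    then show "z \<in> f ` Y" using w by blast
  qed
qed


lemma char:
  assumes p: "p permutes {1..m}" and bg: "bigrassmannian m p" and nid: "\<exists>i. p i \<noteq> i"
  shows "\<exists>a b c. 1 \<le> b \<and> 1 \<le> c \<and> a+b+c \<le> m \<and> p = blk a b c"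
proof -
  define q where "q = inv p"
  have q: "q permutes {1..m}" unfolding q_def using p by (rule permutes_inv)
  have pq: "p (q v) = v" for v unfolding q_def using p by (rule permutes_inverses)
  have qp: "q (p v) = v" for v unfolding q_def using p by (rule permutes_inverses)
  have gp: "grassmannian m p" and gq: "grassmannian m q" using bg by (auto simp: bigrassmannian_def q_def)
  obtain r where r: "descents m p = {r}" using one_desc[OF p gp nid] by blast
  have nidq: "\<exists>i. q i \<noteq> i" using nid pq by metis
  obtain s where s: "descents m q = {s}" using one_desc[OF q gq nidq] by blast
  have rr: "1 \<le> r" "r < m" "p (Suc r) < p r" using r unfolding descents_def by auto
  have ss: "1 \<le> s" "s < m" "q (Suc s) < q s" using s unfolding descents_def by auto
  have mp1: "strict_mono_on {1..r} p" and mp2: "strict_mono_on {Suc r..m} p"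
    using desc_mono[OF p] r by auto
  have mq1: "strict_mono_on {1..s} q" and mq2: "strict_mono_on {Suc s..m} q"
    using desc_mono[OF q] s by auto
  have pin: "p x \<in> {1..m}" if "x \<in> {1..m}" for x by (rule iffD2[OF permutes_in_image[OF p] that])
  have qin: "q x \<in> {1..m}" if "x \<in> {1..m}" for x by (rule iffD2[OF permutes_in_image[OF q] that])
  define A where "A = p ` {1..r}"
  have A: "A = {v \<in> {1..m}. q v \<le> r}"
  proof
    show "A \<subseteq> {v \<in> {1..m}. q v \<le> r}" unfolding A_def using pin qp rr by auto
    show "{v \<in> {1..m}. q v \<le> r} \<subseteq> A"
    proof
      fix v assume v: "v \<in> {v \<in> {1..m}. q v \<le> r}"
      then have "q v \<in> {1..r}" using qin by auto
      then show "v \<in> A" unfolding A_def using pq by (metis image_eqI)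
    qed
  qed
  have cA: "card A = r" unfolding A_def
    using card_image[OF inj_on_subset[OF permutes_inj[OF p]]] by simp
  define D1 where "D1 = A \<inter> {1..s}"
  define D2 where "D2 = A \<inter> {Suc s..m}"
  have "\<exists>e. 1 \<le> e \<and> e \<le> Suc s \<and> D1 = {1..<e}"
  proof (rule dc_interval)
    show "D1 \<subseteq> {1..s}" unfolding D1_def by auto
    fix v u assume v: "v \<in> D1" and u: "1 \<le> u" "u \<le> v"
    show "u \<in> D1"
    proof (cases "u = v")
      case True then show ?thesis using v by simp
    next
      case False
      then have "q u < q v" using strict_mono_onD[OF mq1, of u v] v u unfolding D1_def by auto
      then show ?thesis using v u ss unfolding D1_def A by auto
    qed
  qed simp
  then obtain e1 where e1: "1 \<le> e1" "e1 \<le> Suc s" "D1 = {1..<e1}" by blast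
  have "\<exists>e. Suc s \<le> e \<and> e \<le> Suc m \<and> D2 = {Suc s..<e}"
  proof (rule dc_interval)
    show "D2 \<subseteq> {Suc s..m}" unfolding D2_def by auto
    show "Suc s \<le> Suc m" using ss by simp
    fix v u assume v: "v \<in> D2" and u: "Suc s \<le> u" "u \<le> v"
    show "u \<in> D2"
    proof (cases "u = v")
      case True then show ?thesis using v by simp
    next
      case False
      then have "q u < q v" using strict_mono_onD[OF mq2, of u v] v u unfolding D2_def by auto
      then show ?thesis using v u ss unfolding D2_def A by auto
    qed
  qed
  then obtain e2 where e2: "Suc s \<le> e2" "e2 \<le> Suc m" "D2 = {Suc s..<e2}" by blast
  have sA: "s \<notin> A"
  proof
    assume "s \<in> A"
    then have qs: "q s \<le> r" "1 \<le> q (Suc s)" using A qin[of "Suc s"] ss by auto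
    have "p (q (Suc s)) < p (q s)"
      using strict_mono_onD[OF mp1, of "q (Suc s)" "q s"] qs ss by auto
    then show False using pq by simp
  qed
  have s1A: "Suc s \<in> A"
  proof (rule ccontr)
    assume "Suc s \<notin> A"
    then have qs: "r < q (Suc s)" "q s \<le> m" using A qin[of "Suc s"] qin[of s] ss by auto
    have "p (q (Suc s)) < p (q s)"
      using strict_mono_onD[OF mp2, of "q (Suc s)" "q s"] qs ss by auto
    then show False using pq by simp
  qed
  have e1s: "e1 \<le> s"
  proof (rule ccontr)
    assume "\<not> e1 \<le> s"
    then have "s \<in> D1" using e1 ss by auto
    then show False using sA unfolding D1_def by simp
  qed
  have e2s: "Suc (Suc s) \<le> e2"
  proof (rule ccontr)
    assume "\<not> Suc (Suc s) \<le> e2"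
    then have "Suc s \<notin> D2" using e2 by auto
    then show False using s1A ss unfolding D2_def by simp
  qed
  have AD: "A = D1 \<union> D2" unfolding D1_def D2_def A by auto
  have "card A = card D1 + card D2"
    unfolding AD by (rule card_Un_disjoint) (auto simp: D1_def D2_def)
  then have rsum: "r = (e1 - 1) + (e2 - Suc s)" using cA e1 e2 by simp
  define a where "a = e1 - 1"
  define c where "c = s - a"
  define b where "b = e2 - Suc s"
  have b1: "1 \<le> b" and c1: "1 \<le> c" and abc: "a + b + c \<le> m" and rab: "r = a + b"
    using e1 e2 e1s e2s rsum unfolding a_def b_def c_def by auto
  have ea: "Suc a = e1" "a + c = s" "Suc (a + b + c) = e2"
    using e1 e2 e1s e2s unfolding a_def b_def c_def by auto
  have Ablk: "A = blk a b c ` {1..r}"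
    unfolding rab blk_img ea AD using e1 e2 by simp
  have g: "blk a b c permutes {1..m}" using blk_permutes[OF abc] .
  have eq1: "p i = blk a b c i" if "i \<in> {1..r}" for i
    using mono_unique[OF mp1 _ _ that, of "blk a b c"] blk_mono1[of a b c] Ablk
    unfolding A_def rab by simp
  have un: "{1..r} \<union> {Suc r..m} = {1..m}" using rr by auto
  have int: "{1..r} \<inter> {Suc r..m} = {}" by auto
  have eq2: "p i = blk a b c i" if "i \<in> {Suc r..m}" for i
  proof -
    have "p ` {Suc r..m} = blk a b c ` {Suc r..m}"
      using img_compl[OF p un int] img_compl[OF g un int] Ablk unfolding A_def by simp
    then show ?thesis
      using mono_unique[OF mp2 _ _ that, of "blk a b c"] blk_mono2[where a=a and b=b and c=c and m=m] unfolding rab by simp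
  qed
  have "p = blk a b c"
  proof
    fix i
    show "p i = blk a b c i"
    proof (cases "i \<in> {1..m}")
      case True
      then have "i \<in> {1..r} \<or> i \<in> {Suc r..m}" by auto
      then show ?thesis using eq1 eq2 by blast
    next
      case False
      then show ?thesis using p g by (simp add: permutes_not_in)
    qed
  qed
  then show ?thesis using b1 c1 abc by blast
qed





lemma blk_avoid:
  assumes b: "1 \<le> b" and c: "1 \<le> c" and abc: "a+b+c \<le> m" and km: "k \<le> m"
  shows "avoids_id m k (blk a b c) \<longleftrightarrow> (m - k + 1 \<le> b \<and> m - k + 1 \<le> c)"
proof
  assume av: "avoids_id m k (blk a b c)"
  show "m - k + 1 \<le> b \<and> m - k + 1 \<le> c"
  proof (rule ccontr)
    assume "\<not> (m - k + 1 \<le> b \<and> m - k + 1 \<le> c)"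
    then consider "b + k \<le> m" | "c + k \<le> m" using km by linarith
    then show False
    proof cases
      case 1
      define f where "f j = (if j < a then j+1 else j+1+b)" for j
      have "contains_id m k (blk a b c)"
        unfolding contains_id_def
      proof (intro exI conjI)
        show "f ` {..<k} \<subseteq> {1..m}" using 1 by (auto simp: f_def)
        show "strict_mono_on {..<k} f" by (rule strict_mono_onI) (auto simp: f_def)
        have h: "(blk a b c \<circ> f) j = (if j < a + c then Suc j else j+1+b)" for j
          by (simp add: f_def blk_def)
        show "strict_mono_on {..<k} (blk a b c \<circ> f)"
          by (rule strict_mono_onI) (simp add: h[unfolded o_def])
      qed
      then show False using av by (simp add: avoids_id_def)
    next
      case 2
      define f where "f j = (if j < a+b then j+1 else j+1+c)" for j
      have "contains_id m k (blk a b c)"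
        unfolding contains_id_def
      proof (intro exI conjI)
        show "f ` {..<k} \<subseteq> {1..m}" using 2 by (auto simp: f_def)
        show "strict_mono_on {..<k} f" by (rule strict_mono_onI) (auto simp: f_def)
        have h: "(blk a b c \<circ> f) j = (if j < a then Suc j else j+1+c)" for j
          by (simp add: f_def blk_def)
        show "strict_mono_on {..<k} (blk a b c \<circ> f)"
          by (rule strict_mono_onI) (simp add: h[unfolded o_def])
      qed
      then show False using av by (simp add: avoids_id_def)
    qed
  qed
next
  assume bc: "m - k + 1 \<le> b \<and> m - k + 1 \<le> c"
  show "avoids_id m k (blk a b c)"
    unfolding avoids_id_def contains_id_def
  proof
    assume "\<exists>f. f ` {..<k} \<subseteq> {1..m} \<and> strict_mono_on {..<k} f \<and> strict_mono_on {..<k} (blk a b c \<circ> f)"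
    then obtain f where fim: "f ` {..<k} \<subseteq> {1..m}" and fm: "strict_mono_on {..<k} f"
      and gm: "strict_mono_on {..<k} (blk a b c \<circ> f)" by blast
    have ck: "card (f ` {..<k}) = k"
      using strict_mono_on_imp_inj_on[OF fm] by (simp add: card_image)
    have key: "f ` {..<k} \<subseteq> {1..m} - {Suc a..a+b} \<or> f ` {..<k} \<subseteq> {1..m} - {Suc (a+b)..a+b+c}"
    proof (rule ccontr)
      assume "\<not> ?thesis"
      then obtain x1 x2 where x1: "x1 \<in> f ` {..<k}" "x1 \<in> {Suc a..a+b}"
          and x2: "x2 \<in> f ` {..<k}" "x2 \<in> {Suc (a+b)..a+b+c}"
        using fim unfolding subset_iff by (meson DiffI)
      then obtain j1 j2 where j1: "j1 < k" "f j1 \<in> {Suc a..a+b}" and j2: "j2 < k" "f j2 \<in> {Suc (a+b)..a+b+c}"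
        by blast
      have "j1 < j2"
      proof (rule ccontr)
        assume "\<not> j1 < j2"
        then have "j2 < j1 \<or> j2 = j1" by linarith
        then have "f j2 \<le> f j1" using strict_mono_onD[OF fm, of j2 j1] j1 j2 by auto
        then show False using j1 j2 by simp
      qed
      then have "blk a b c (f j1) < blk a b c (f j2)" using strict_mono_onD[OF gm, of j1 j2] j1 j2 by auto
      moreover have "blk a b c (f j1) = f j1 + c" using j1 by (simp add: blk_def)
      moreover have "blk a b c (f j2) = f j2 - b" using j2 by (simp add: blk_def)
      ultimately have "f j1 + c < f j2 - b" by simp
      moreover have "f j2 - b \<le> a + c" using j2(2) unfolding atLeastAtMost_iff by arith
      moreover have "a + c < f j1 + c" using j1 by simp
      ultimately show False by linarith
    qed
    have c1: "card ({1..m} - {Suc a..a+b}) = m - b"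
      using abc by (subst card_Diff_subset) auto
    have c2: "card ({1..m} - {Suc (a+b)..a+b+c}) = m - c"
      using abc by (subst card_Diff_subset) auto
    from key show False
    proof
      assume "f ` {..<k} \<subseteq> {1..m} - {Suc a..a+b}"
      then have "card (f ` {..<k}) \<le> card ({1..m} - {Suc a..a+b})" by (intro card_mono) auto
      then have "k \<le> m - b" using ck c1 by simp
      then show False using bc km abc b c by arith
    next
      assume "f ` {..<k} \<subseteq> {1..m} - {Suc (a+b)..a+b+c}"
      then have "card (f ` {..<k}) \<le> card ({1..m} - {Suc (a+b)..a+b+c})" by (intro card_mono) auto
      then have "k \<le> m - c" using ck c2 by simp
      then show False using bc km abc b c by arith
    qed
  qed
qed




lemma sort3: "x \<noteq> y \<Longrightarrow> y \<noteq> z \<Longrightarrow> x \<noteq> z \<Longrightarrow> \<exists>u v w. u < v \<and> v < w \<and> {x,y,z} = {u,v,(w::nat)}"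
  by (metis insert_commute linorder_neqE_nat)

lemma tri_inj:
  assumes "u < v" "v < w" "u' < v'" "v' < w'" "{u,v,w} = {u',v',(w'::nat)}"
  shows "u = u' \<and> v = v' \<and> w = w'"
proof -
  have 1: "u \<in> {u',v',w'}" "v \<in> {u',v',w'}" "w \<in> {u',v',w'}" using assms(5) by blast+
  have 2: "u' \<in> {u,v,w}" "v' \<in> {u,v,w}" "w' \<in> {u,v,w}" using assms(5) by blast+
  have uu: "u = u'" using 1 2 assms(1-4) by auto
  have ww: "w = w'" using 1 2 assms(1-4) by auto
  have "v = v'" using 1 2 assms(1-4) uu ww by auto
  then show ?thesis using uu ww by simp
qed

lemma id_contains: "1 \<le> k \<Longrightarrow> k \<le> m \<Longrightarrow> contains_id m k (\<lambda>i. i)"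
  unfolding contains_id_def
  by (rule exI[of _ Suc]) (auto intro!: strict_mono_onI)

theorem theorem5p2:
  fixes k m :: nat
  assumes "k \<ge> 1" and "k \<le> m" and "m < 2 * k"
  shows "card {p. p permutes {1..m} \<and> bigrassmannian m p \<and> avoids_id m k p}
           = (2 * k - m + 1) choose 3"
proof -
  define d where "d = m - k + 1"
  define n where "n = 2 * k - m"
  have d1: "1 \<le> d" unfolding d_def by simp
  define T where "T = {(a,b,c). d \<le> b \<and> d \<le> c \<and> a+b+c \<le> m}"
  define B where "B = (\<lambda>(a,b,c). blk a b c)"
  have S: "{p. p permutes {1..m} \<and> bigrassmannian m p \<and> avoids_id m k p} = B ` T"
  proof
    show "{p. p permutes {1..m} \<and> bigrassmannian m p \<and> avoids_id m k p} \<subseteq> B ` T"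
    proof
      fix p assume p: "p \<in> {p. p permutes {1..m} \<and> bigrassmannian m p \<and> avoids_id m k p}"
      have nid: "\<exists>i. p i \<noteq> i"
      proof (rule ccontr)
        assume "\<not> (\<exists>i. p i \<noteq> i)"
        then have "p = (\<lambda>i. i)" by auto
        then show False using p id_contains[OF assms(1,2)] by (simp add: avoids_id_def)
      qed
      obtain a b c where abc: "1 \<le> b" "1 \<le> c" "a+b+c \<le> m" "p = blk a b c"
        using char[OF _ _ nid] p by blast
      have "d \<le> b \<and> d \<le> c" using blk_avoid[OF abc(1-3) assms(2)] p abc(4) unfolding d_def by simp
      then show "p \<in> B ` T" using abc unfolding T_def B_def by (auto intro!: image_eqI[of _ _ "(a,b,c)"])
    qed
    show "B ` T \<subseteq> {p. p permutes {1..m} \<and> bigrassmannian m p \<and> avoids_id m k p}"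
    proof
      fix p assume "p \<in> B ` T"
      then obtain a b c where abc: "d \<le> b" "d \<le> c" "a+b+c \<le> m" "p = blk a b c"
        unfolding T_def B_def by auto
      have "avoids_id m k p" using blk_avoid[of b c a m k] abc d1 assms(2) unfolding d_def by simp
      then show "p \<in> {p. p permutes {1..m} \<and> bigrassmannian m p \<and> avoids_id m k p}"
        using blk_permutes[OF abc(3)] blk_bigrass abc(4) by simp
    qed
  qed
  have injB: "inj_on B T"
  proof (rule inj_onI)
    fix x y assume "x \<in> T" "y \<in> T" "B x = B y"
    then show "x = y" using blk_inj[of _ _ _ _ _] d1 unfolding T_def B_def
      by (cases x; cases y) (auto dest!: blk_inj[rotated 4])
  qed
  define h where "h = (\<lambda>(a,b,c). {a, a + (b+1-d), a + (b+1-d) + (c+1-d)} :: nat set)"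
  define U where "U = {X. X \<subseteq> {0..n} \<and> card X = 3}"
  have injh: "inj_on h T"
  proof (rule inj_onI)
    fix x y assume xy: "x \<in> T" "y \<in> T" "h x = h y"
    obtain a b c where x: "x = (a,b,c)" by (cases x) auto
    obtain a' b' c' where y: "y = (a',b',c')" by (cases y) auto
    have bc: "d \<le> b" "d \<le> c" "d \<le> b'" "d \<le> c'" using xy x y unfolding T_def by auto
    have "a = a' \<and> a + (b+1-d) = a' + (b'+1-d) \<and> a + (b+1-d) + (c+1-d) = a' + (b'+1-d) + (c'+1-d)"
      by (rule tri_inj) (use xy x y bc in \<open>auto simp: h_def\<close>)
    then show "x = y" using x y bc by auto
  qed
  have hT: "h ` T = U"
  proof
    show "h ` T \<subseteq> U"
    proof
      fix X assume "X \<in> h ` T"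
      then obtain a b c where abc: "d \<le> b" "d \<le> c" "a+b+c \<le> m" "X = {a, a + (b+1-d), a + (b+1-d) + (c+1-d)}"
        unfolding T_def h_def by auto
      have le: "a + (b+1-d) + (c+1-d) \<le> n" using abc assms unfolding d_def n_def by arith
      have "card X = 3" using abc d1 by (auto simp: card_insert_if)
      then show "X \<in> U" using le abc unfolding U_def by auto
    qed
    show "U \<subseteq> h ` T"
    proof
      fix X assume "X \<in> U"
      then have X: "X \<subseteq> {0..n}" "card X = 3" unfolding U_def by auto
      then obtain x y z where "X = {x,y,z}" "x \<noteq> y" "y \<noteq> z" "x \<noteq> z" using card_3_iff by metis
      then obtain u v w where uvw: "u < v" "v < w" "X = {u,v,w}" using sort3 by metis
      have wn: "w \<le> n" using X uvw by auto
      define b where "b = v - u + d - 1"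
      define c where "c = w - v + d - 1"
      have "(u, b, c) \<in> T" using uvw wn d1 assms unfolding T_def b_def c_def d_def n_def by auto
      moreover have "h (u,b,c) = X" using uvw d1 unfolding h_def b_def c_def by auto
      ultimately show "X \<in> h ` T" by (metis image_eqI)
    qed
  qed
  have "card {p. p permutes {1..m} \<and> bigrassmannian m p \<and> avoids_id m k p} = card T"
    unfolding S using injB by (rule card_image)
  also have "\<dots> = card U" using card_image[OF injh] hT by simp
  also have "\<dots> = card {0..n} choose 3" unfolding U_def by (rule n_subsets) simp
  also have "\<dots> = (2 * k - m + 1) choose 3" unfolding n_def by simp
  finally show ?thesis .
qed


end
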